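(* Let $f_1,h_1$ be arbitrary smooth functions of one variable and $f_0,h_0$ arbitrary constants. For the equation $m_t+f(u,u_x)m+(g(u,u_x)m)_x=0$, $m=u-u_{xx}$, with $$f(u,u_x)=u_xf_1(u^2-u_x^2)+\frac{f_0u}{u^2-u_x^2},\qquad g(u,u_x)=uf_1(u^2-u_x^2)+h_1(u^2-u_x^2)+\frac{f_0u^2+h_0u}{u_x(u^2-u_x^2)},$$ both a local conservation law for momentum, $D_t u+D_x\Phi_1=0$, and a local conservation law for the $H^1$ density, $D_t(u_x^2+u^2)+D_x\Phi_2=0$, hold on all locally smooth solutions (for suitable fluxes $\Phi_1,\Phi_2$ depending on $x,u,u_x,m,u_t,u_{tx}$).
   Context: $D_t$, $D_x$ denote total derivatives; a local conservation law holds on solutions, i.e. after eliminating $m_t$ via $m_t=-f(u,u_x)m-(g(u,u_x)m)_x$. The expressions are considered on open sets where they are defined. *)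

theory Defs
  imports "HOL-Analysis.Analysis"
begin

definition pt :: "(real \<Rightarrow> real \<Rightarrow> real) \<Rightarrow> real \<Rightarrow> real \<Rightarrow> real" where
  "pt F t x = deriv (\<lambda>s. F s x) t"

definition px :: "(real \<Rightarrow> real \<Rightarrow> real) \<Rightarrow> real \<Rightarrow> real \<Rightarrow> real" where
  "px F t x = deriv (\<lambda>y. F t y) x"

fun dapp :: "bool list \<Rightarrow> (real \<Rightarrow> real \<Rightarrow> real) \<Rightarrow> real \<Rightarrow> real \<Rightarrow> real" where
  "dapp [] F = F"
| "dapp (b # bs) F = (if b then pt else px) (dapp bs F)"

definition smooth2_on :: "(real \<times> real) set \<Rightarrow> (real \<Rightarrow> real \<Rightarrow> real) \<Rightarrow> bool" where
  "smooth2_on U F \<longleftrightarrow> (\<forall>ds. (\<lambda>z. dapp ds F (fst z) (snd z)) differentiable_on U)"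

definition smooth1 :: "(real \<Rightarrow> real) \<Rightarrow> bool" where
  "smooth1 f \<longleftrightarrow> (\<forall>n. (deriv ^^ n) f differentiable_on UNIV)"

end

theory Submission
  imports Defs
begin


lemma partial_has:
  assumes "((\<lambda>z. G (fst z) (snd z)) has_derivative D) (at (a,b))"
  shows "((\<lambda>s. G s b) has_real_derivative D (1,0)) (at a)"
    and "((\<lambda>y. G a y) has_real_derivative D (0,1)) (at b)"
proof -
  have bl: "bounded_linear D" using assms has_derivative_bounded_linear by blast
  have p1: "((\<lambda>s. (s, b)) has_derivative (\<lambda>h. (h, 0))) (at a)"
    by (auto intro!: derivative_eq_intros)
  have "(((\<lambda>z. G (fst z) (snd z)) \<circ> (\<lambda>s. (s, b))) has_derivative (D \<circ> (\<lambda>h. (h, 0)))) (at a)"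
    by (rule diff_chain_at[OF p1]) (simp add: assms)
  moreover have "D \<circ> (\<lambda>h. (h, 0)) = (\<lambda>h. D (1,0) * h)"
  proof
    fix h :: real
    have "(h, 0::real) = h *\<^sub>R (1, 0)" by simp
    then show "(D \<circ> (\<lambda>h. (h, 0))) h = D (1,0) * h"
      using linear_scale[OF bounded_linear.linear[OF bl], of h "(1,0)"] by (simp add: mult.commute)
  qed
  ultimately show "((\<lambda>s. G s b) has_real_derivative D (1,0)) (at a)"
    by (simp add: has_field_derivative_def o_def)
  have p2: "((\<lambda>s. (a, s)) has_derivative (\<lambda>h. (0, h))) (at b)"
    by (auto intro!: derivative_eq_intros)
  have "(((\<lambda>z. G (fst z) (snd z)) \<circ> (\<lambda>s. (a, s))) has_derivative (D \<circ> (\<lambda>h. (0, h)))) (at b)"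
    by (rule diff_chain_at[OF p2]) (simp add: assms)
  moreover have "D \<circ> (\<lambda>h. (0, h)) = (\<lambda>h. D (0,1) * h)"
  proof
    fix h :: real
    have "(0::real, h) = h *\<^sub>R (0, 1)" by simp
    then show "(D \<circ> (\<lambda>h. (0, h))) h = D (0,1) * h"
      using linear_scale[OF bounded_linear.linear[OF bl], of h "(0,1)"] by (simp add: mult.commute)
  qed
  ultimately show "((\<lambda>y. G a y) has_real_derivative D (0,1)) (at b)"
    by (simp add: has_field_derivative_def o_def)
qed

lemma partial_derivs:
  assumes "(\<lambda>z. G (fst z) (snd z)) differentiable (at (a,b))"
  shows "((\<lambda>s. G s b) has_real_derivative pt G a b) (at a)"
    and "((\<lambda>y. G a y) has_real_derivative px G a b) (at b)"
proof -
  obtain D where D: "((\<lambda>z. G (fst z) (snd z)) has_derivative D) (at (a,b))"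
    using assms differentiable_def by blast
  show "((\<lambda>s. G s b) has_real_derivative pt G a b) (at a)"
    using partial_has(1)[OF D] by (simp add: pt_def DERIV_imp_deriv)
  show "((\<lambda>y. G a y) has_real_derivative px G a b) (at b)"
    using partial_has(2)[OF D] by (simp add: px_def DERIV_imp_deriv)
qed

lemma mvt_sym:
  fixes phi phi' :: "real \<Rightarrow> real"
  assumes "h \<noteq> 0" and "\<And>s. \<bar>s - t\<bar> \<le> \<bar>h\<bar> \<Longrightarrow> (phi has_real_derivative phi' s) (at s)"
  shows "\<exists>\<xi>. \<bar>\<xi> - t\<bar> \<le> \<bar>h\<bar> \<and> phi (t+h) - phi t = h * phi' \<xi>"
proof (cases "h > 0")
  case True
  obtain z where "t < z" "z < t+h" "phi (t+h) - phi t = (t+h - t) * phi' z"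
    using MVT2[of t "t+h" phi phi'] assms True by force
  then show ?thesis by (intro exI[of _ z]) auto
next
  case False
  then have h: "h < 0" using assms(1) by simp
  obtain z where "t+h < z" "z < t" "phi t - phi (t+h) = (t - (t+h)) * phi' z"
    using MVT2[of "t+h" t phi phi'] assms h by force
  then show ?thesis by (intro exI[of _ z]) (auto simp: algebra_simps)
qed



lemma clairaut_half:
  fixes F Ft :: "real \<Rightarrow> real \<Rightarrow> real"
  assumes r: "r > 0"
    and hasd: "\<And>a b. \<bar>a - t\<bar> < r \<Longrightarrow> \<bar>b - x\<bar> < r \<Longrightarrow> ((\<lambda>s. F s b) has_real_derivative Ft a b) (at a)"
    and D: "((\<lambda>z. Ft (fst z) (snd z)) has_derivative D) (at (t,x))"
  shows "((\<lambda>h. (F (t+h) (x+h) - F (t+h) x - F t (x+h) + F t x) / h^2) \<longlongrightarrow> D (0,1)) (at 0)"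
proof -
  have bl: "bounded_linear D" using D has_derivative_bounded_linear by blast
  have lin: "linear D" using bl bounded_linear.linear by blast
  have Dalt: "\<forall>e>0. \<exists>d>0. \<forall>y. norm(y - (t,x)) < d \<longrightarrow>
      norm (Ft (fst y) (snd y) - Ft t x - D (y - (t,x))) \<le> e * norm (y - (t,x))"
    using D unfolding has_derivative_at_alt by simp
  show ?thesis
  unfolding LIM_eq
  proof (intro allI impI)
    fix e :: real assume e: "e > 0"
    obtain d1 where d1: "d1 > 0" and d1b: "\<And>y. norm(y - (t,x)) < d1 \<Longrightarrow>
      norm (Ft (fst y) (snd y) - Ft t x - D (y - (t,x))) \<le> (e/8) * norm (y - (t,x))"
      using Dalt[rule_format, of "e/8"] e by auto
    define R where "R = (\<lambda>y. Ft (fst y) (snd y) - Ft t x - D (y - (t,x)))"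
    show "\<exists>s>0. \<forall>h. h \<noteq> 0 \<and> norm (h - 0) < s \<longrightarrow>
      norm ((F (t+h) (x+h) - F (t+h) x - F t (x+h) + F t x) / h^2 - D (0,1)) < e"
    proof (intro exI[of _ "min r (d1/2)"] conjI allI impI)
      show "min r (d1/2) > 0" using r d1 by simp
      fix h :: real assume h: "h \<noteq> 0 \<and> norm (h - 0) < min r (d1/2)"
      have h0: "h \<noteq> 0" and hr: "\<bar>h\<bar> < r" and hd: "\<bar>h\<bar> < d1/2" using h by auto
      have "\<exists>\<xi>. \<bar>\<xi> - t\<bar> \<le> \<bar>h\<bar> \<and> (F (t+h) (x+h) - F (t+h) x) - (F t (x+h) - F t x)
              = h * (Ft \<xi> (x+h) - Ft \<xi> x)"
      proof (rule mvt_sym[where phi="\<lambda>s. F s (x+h) - F s x" and phi'="\<lambda>s. Ft s (x+h) - Ft s x"])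
        fix s assume s: "\<bar>s - t\<bar> \<le> \<bar>h\<bar>"
        show "((\<lambda>s. F s (x + h) - F s x) has_real_derivative Ft s (x + h) - Ft s x) (at s)"
          using hasd[of s "x+h"] hasd[of s x] s hr by (intro DERIV_diff) auto
      qed (use h0 in auto)
      then obtain \<xi> where xi: "\<bar>\<xi> - t\<bar> \<le> \<bar>h\<bar>"
        and eq: "(F (t+h) (x+h) - F (t+h) x) - (F t (x+h) - F t x) = h * (Ft \<xi> (x+h) - Ft \<xi> x)"
        by blast
      have n1: "norm ((\<xi>, x+h) - (t,x)) \<le> 2 * \<bar>h\<bar>"
      proof -
        have "norm ((\<xi>, x+h) - (t,x)) = norm (\<xi> - t, h)" by simp
        also have "\<dots> \<le> norm (\<xi> - t) + norm h" by (rule norm_Pair_le)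
        finally show ?thesis using xi by simp
      qed
      have n2: "norm ((\<xi>, x) - (t,x)) \<le> \<bar>h\<bar>"
      proof -
        have "norm ((\<xi>, x) - (t,x)) = norm (\<xi> - t, 0::real)" by simp
        also have "\<dots> \<le> norm (\<xi> - t) + norm (0::real)" by (rule norm_Pair_le)
        finally show ?thesis using xi by simp
      qed
      have R1: "\<bar>R (\<xi>, x+h)\<bar> \<le> (e/8) * (2 * \<bar>h\<bar>)"
      proof -
        have "\<bar>R (\<xi>, x+h)\<bar> \<le> (e/8) * norm ((\<xi>, x+h) - (t,x))"
          using d1b[of "(\<xi>, x+h)"] n1 hd unfolding R_def by auto
        also have "\<dots> \<le> (e/8) * (2 * \<bar>h\<bar>)" using n1 e by (intro mult_left_mono) auto
        finally show ?thesis .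
      qed
      have R2: "\<bar>R (\<xi>, x)\<bar> \<le> (e/8) * \<bar>h\<bar>"
      proof -
        have "\<bar>R (\<xi>, x)\<bar> \<le> (e/8) * norm ((\<xi>, x) - (t,x))"
          using d1b[of "(\<xi>, x)"] n2 hd unfolding R_def by auto
        also have "\<dots> \<le> (e/8) * \<bar>h\<bar>" using n2 e by (intro mult_left_mono) auto
        finally show ?thesis .
      qed
      have Dd: "D ((\<xi>, x+h) - (t,x)) - D ((\<xi>, x) - (t,x)) = h * D (0,1)"
      proof -
        have "D ((\<xi>, x+h) - (t,x)) - D ((\<xi>, x) - (t,x)) = D (((\<xi>, x+h) - (t,x)) - ((\<xi>, x) - (t,x)))"
          using linear_diff[OF lin] by metis
        also have "((\<xi>, x+h) - (t,x)) - ((\<xi>, x) - (t,x)) = h *\<^sub>R (0::real, 1::real)" by simp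
        also have "D (h *\<^sub>R (0, 1)) = h * D (0,1)" using linear_scale[OF lin, of h "(0,1)"] by simp
        finally show ?thesis .
      qed
      have diffeq: "Ft \<xi> (x+h) - Ft \<xi> x = h * D (0,1) + (R (\<xi>, x+h) - R (\<xi>, x))"
        using Dd unfolding R_def by simp
      have q: "(F (t+h) (x+h) - F (t+h) x - F t (x+h) + F t x) / h^2 - D (0,1)
            = (R (\<xi>, x+h) - R (\<xi>, x)) / h"
      proof -
        have num: "F (t+h) (x+h) - F (t+h) x - F t (x+h) + F t x
            = h * (h * D (0,1) + (R (\<xi>, x+h) - R (\<xi>, x)))"
          using eq unfolding diffeq by (simp add: algebra_simps)
        show ?thesis unfolding num using h0 by (simp add: power2_eq_square field_simps)
      qed
      have a1: "\<bar>R (\<xi>, x+h) - R (\<xi>, x)\<bar> \<le> (3*e/8) * \<bar>h\<bar>"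
        using R1 R2 abs_triangle_ineq4[of "R (\<xi>, x+h)" "R (\<xi>, x)"] by (simp add: algebra_simps)
      have a2: "\<bar>(R (\<xi>, x+h) - R (\<xi>, x)) / h\<bar> \<le> 3*e/8"
        using a1 h0 by (simp add: abs_divide divide_le_eq)
      show "norm ((F (t+h) (x+h) - F (t+h) x - F t (x+h) + F t x) / h^2 - D (0,1)) < e"
        unfolding q real_norm_def using a2 e by linarith
    qed
  qed
qed



lemma clairaut:
  fixes G :: "real \<Rightarrow> real \<Rightarrow> real"
  assumes U: "open U" and ab: "(a,b) \<in> U"
    and d0: "(\<lambda>z. G (fst z) (snd z)) differentiable_on U"
    and dt: "(\<lambda>z. pt G (fst z) (snd z)) differentiable_on U"
    and dx: "(\<lambda>z. px G (fst z) (snd z)) differentiable_on U"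
  shows "px (pt G) a b = pt (px G) a b"
proof -
  obtain r where r: "r > 0" and rb: "ball (a,b) r \<subseteq> U"
    using U ab open_contains_ball by blast
  have inU: "(s,y) \<in> U" if "\<bar>s - a\<bar> < r/2" "\<bar>y - b\<bar> < r/2" for s y
  proof -
    have "dist (a,b) (s,y) = norm (a - s, b - y)" by (simp add: dist_norm)
    also have "\<dots> \<le> norm (a - s) + norm (b - y)" by (rule norm_Pair_le)
    finally have "dist (a,b) (s,y) < r" using that by (simp add: abs_minus_commute)
    then show ?thesis using rb by auto
  qed
  have diffat: "(\<lambda>z. H (fst z) (snd z)) differentiable (at (s,y))"
    if "(\<lambda>z. H (fst z) (snd z)) differentiable_on U" "\<bar>s - a\<bar> < r/2" "\<bar>y - b\<bar> < r/2" for H s y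
    using that inU differentiable_on_eq_differentiable_at[OF U] by blast
  obtain Dt where Dt: "((\<lambda>z. pt G (fst z) (snd z)) has_derivative Dt) (at (a,b))"
    using diffat[OF dt, of a b] r differentiable_def by auto
  obtain Dx where Dx: "((\<lambda>z. px G (fst z) (snd z)) has_derivative Dx) (at (a,b))"
    using diffat[OF dx, of a b] r differentiable_def by auto
  have e1: "px (pt G) a b = Dt (0,1)"
    using partial_has(2)[OF Dt] by (simp add: px_def DERIV_imp_deriv)
  have e2: "pt (px G) a b = Dx (1,0)"
    using partial_has(1)[OF Dx] by (simp add: pt_def DERIV_imp_deriv)
  have r2: "r/2 > 0" using r by simp
  have L1: "((\<lambda>h. (G (a+h) (b+h) - G (a+h) b - G a (b+h) + G a b) / h^2) \<longlongrightarrow> Dt (0,1)) (at 0)"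
  proof (rule clairaut_half[OF r2 _ Dt])
    fix s y assume "\<bar>s - a\<bar> < r/2" "\<bar>y - b\<bar> < r/2"
    then show "((\<lambda>s. G s y) has_real_derivative pt G s y) (at s)"
      using partial_derivs(1)[OF diffat[OF d0]] by blast
  qed
  have sw: "((\<lambda>z::real\<times>real. (snd z, fst z)) has_derivative (\<lambda>z. (snd z, fst z))) (at (b,a))"
    by (auto intro!: derivative_eq_intros)
  have Dx': "((\<lambda>z. px G (snd z) (fst z)) has_derivative (Dx \<circ> (\<lambda>z. (snd z, fst z)))) (at (b,a))"
  proof -
    have "(((\<lambda>z. px G (fst z) (snd z)) \<circ> (\<lambda>z. (snd z, fst z))) has_derivative (Dx \<circ> (\<lambda>z. (snd z, fst z)))) (at (b,a))"
      by (rule diff_chain_at[OF sw]) (simp add: Dx)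
    then show ?thesis by (simp add: o_def)
  qed
  have L2: "((\<lambda>h. ((\<lambda>s y. G y s) (b+h) (a+h) - (\<lambda>s y. G y s) (b+h) a - (\<lambda>s y. G y s) b (a+h) + (\<lambda>s y. G y s) b a) / h^2)
      \<longlongrightarrow> (Dx \<circ> (\<lambda>z. (snd z, fst z))) (0,1)) (at 0)"
  proof (rule clairaut_half[OF r2 _ Dx'])
    fix s y assume "\<bar>s - b\<bar> < r/2" "\<bar>y - a\<bar> < r/2"
    then show "((\<lambda>s. G y s) has_real_derivative px G y s) (at s)"
      using partial_derivs(2)[OF diffat[OF d0]] by blast
  qed
  have L2': "((\<lambda>h. (G (a+h) (b+h) - G (a+h) b - G a (b+h) + G a b) / h^2) \<longlongrightarrow> Dx (1,0)) (at 0)"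
  proof -
    have "(\<lambda>h. ((\<lambda>s y. G y s) (b+h) (a+h) - (\<lambda>s y. G y s) (b+h) a - (\<lambda>s y. G y s) b (a+h) + (\<lambda>s y. G y s) b a) / h^2)
       = (\<lambda>h. (G (a+h) (b+h) - G (a+h) b - G a (b+h) + G a b) / h^2)"
      by (simp add: algebra_simps)
    then show ?thesis using L2 by simp
  qed
  have "Dt (0,1) = Dx (1,0)"
    using tendsto_unique[OF _ L1 L2'] by simp
  then show ?thesis using e1 e2 by simp
qed

lemma antideriv:
  fixes f :: "real \<Rightarrow> real"
  assumes c: "continuous_on UNIV f"
  shows "\<exists>F. \<forall>z. (F has_real_derivative f z) (at z)"
proof -
  define F where "F = (\<lambda>z. if 0 \<le> z then integral {0..z} f else - integral {z..0} f)"
  have int: "f integrable_on {a..b}" for a b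
    using integrable_continuous_real continuous_on_subset[OF c] by blast
  have comb: "integral {a..c} f + integral {c..b} f = integral {a..b} f" if "a \<le> c" "c \<le> b" for a b c
    using Henstock_Kurzweil_Integration.integral_combine[OF that int] .
  have Fa: "F y = F a + integral {a..y} f" if "a \<le> y" for a y
  proof (cases "0 \<le> a")
    case True
    then show ?thesis using that comb[of 0 a y] by (simp add: F_def)
  next
    case False
    show ?thesis
    proof (cases "0 \<le> y")
      case True
      then show ?thesis using False comb[of a 0 y] by (simp add: F_def)
    next
      case False2: False
      then show ?thesis using False that comb[of a y 0] by (simp add: F_def)
    qed
  qed
  have "(F has_real_derivative f z) (at z)" for z
  proof -
    have "((\<lambda>y. integral {z-1..y} f) has_real_derivative f z) (at z within {z-1..z+1})"
      by (rule integral_has_real_derivative) (auto intro: continuous_on_subset[OF c])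
    then have d: "((\<lambda>y. integral {z-1..y} f) has_real_derivative f z) (at z)"
      by (simp add: at_within_Icc_at)
    have "((\<lambda>y. F (z-1) + integral {z-1..y} f) has_real_derivative f z) (at z)"
      using DERIV_add[OF DERIV_const d] by simp
    then show ?thesis
      by (rule has_field_derivative_transform_within_open[where S="{z-1<..}"]) (auto intro: Fa[symmetric])
  qed
  then show ?thesis by blast
qed



lemma alg2:
  fixes a b c W p q Gd e e' h0 f0 :: real
  assumes Wd: "W = a\<^sup>2 - b\<^sup>2" and W0: "W \<noteq> 0" and b0: "b \<noteq> 0"
  shows "2 * b * ((a * p + q + (f0 * a\<^sup>2 + h0 * a) / (b * W)) * (a - c)) + Gd * (2 * a) - (2 * b * e + e' * (2 * a))
             - q * (2 * a * b - 2 * b * c) - 2 * h0 * 1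
             + h0 / 2 * (4 * (a * c - b\<^sup>2) / W)
         = - (2 * b * e + 2 * a * (e' - (b * p + f0 * a / W) * (a - c) - Gd))"
proof -
  have "W * (2 * b * ((a * p + q + (f0 * a\<^sup>2 + h0 * a) / (b * W)) * (a - c)) + Gd * (2 * a) - (2 * b * e + e' * (2 * a))
             - q * (2 * a * b - 2 * b * c) - 2 * h0 * 1
             + h0 / 2 * (4 * (a * c - b\<^sup>2) / W))
         = W * (- (2 * b * e + 2 * a * (e' - (b * p + f0 * a / W) * (a - c) - Gd)))"
    using W0 b0 by (simp add: field_simps) (simp add: Wd algebra_simps power2_eq_square)
  then show ?thesis using W0 by simp
qed

theorem corollary1:
  fixes f1 h1 :: "real \<Rightarrow> real" and f0 h0 :: real
    and f g :: "real \<Rightarrow> real \<Rightarrow> real"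
  assumes "smooth1 f1" and "smooth1 h1"
    and "f = (\<lambda>u ux. ux * f1 (u\<^sup>2 - ux\<^sup>2) + f0 * u / (u\<^sup>2 - ux\<^sup>2))"
    and "g = (\<lambda>u ux. u * f1 (u\<^sup>2 - ux\<^sup>2) + h1 (u\<^sup>2 - ux\<^sup>2)
                     + (f0 * u\<^sup>2 + h0 * u) / (ux * (u\<^sup>2 - ux\<^sup>2)))"
  shows "\<exists>\<Phi>1 \<Phi>2 :: real \<Rightarrow> real \<Rightarrow> real \<Rightarrow> real \<Rightarrow> real \<Rightarrow> real \<Rightarrow> real.
    \<forall>U u. open U \<and> smooth2_on U u
      \<and> (\<forall>(t, x) \<in> U. px u t x \<noteq> 0 \<and> (u t x)\<^sup>2 - (px u t x)\<^sup>2 \<noteq> 0)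
      \<and> (let m = (\<lambda>t x. u t x - px (px u) t x) in
          \<forall>(t, x) \<in> U. pt m t x + f (u t x) (px u t x) * m t x
                       + px (\<lambda>t x. g (u t x) (px u t x) * m t x) t x = 0)
    \<longrightarrow> (let m = (\<lambda>t x. u t x - px (px u) t x) in
         \<forall>(t, x) \<in> U.
           ((\<lambda>y. \<Phi>1 y (u t y) (px u t y) (m t y) (pt u t y) (px (pt u) t y))
              has_real_derivative (- pt u t x)) (at x)
         \<and> ((\<lambda>y. \<Phi>2 y (u t y) (px u t y) (m t y) (pt u t y) (px (pt u) t y))
              has_real_derivative (- pt (\<lambda>t x. (px u t x)\<^sup>2 + (u t x)\<^sup>2) t x)) (at x))"
proof -
  have cf1: "continuous_on UNIV f1"
    using assms(1) unfolding smooth1_def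
    by (metis differentiable_imp_continuous_on funpow_0)
  have ch1: "continuous_on UNIV h1"
    using assms(2) unfolding smooth1_def
    by (metis differentiable_imp_continuous_on funpow_0)
  obtain F1 where F1: "\<And>z. (F1 has_real_derivative f1 z) (at z)" using antideriv[OF cf1] by blast
  obtain H1 where H1: "\<And>z. (H1 has_real_derivative h1 z) (at z)" using antideriv[OF ch1] by blast
  have f1d: "\<And>z. (f1 has_real_derivative deriv f1 z) (at z)"
    using assms(1) unfolding smooth1_def
    by (metis DERIV_deriv_iff_real_differentiable differentiable_on_eq_differentiable_at funpow_0 open_UNIV UNIV_I)
  have h1d: "\<And>z. (h1 has_real_derivative deriv h1 z) (at z)"
    using assms(2) unfolding smooth1_def
    by (metis DERIV_deriv_iff_real_differentiable differentiable_on_eq_differentiable_at funpow_0 open_UNIV UNIV_I)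
  define P1 :: "real \<Rightarrow> real \<Rightarrow> real \<Rightarrow> real \<Rightarrow> real \<Rightarrow> real \<Rightarrow> real" where
    "P1 = (\<lambda>y a b c d e. g a b * c - e + F1 (a\<^sup>2 - b\<^sup>2) / 2 + f0 * y
                         - f0 / 4 * (ln ((a + b)\<^sup>2) - ln ((a - b)\<^sup>2)))"
  define P2 :: "real \<Rightarrow> real \<Rightarrow> real \<Rightarrow> real \<Rightarrow> real \<Rightarrow> real \<Rightarrow> real" where
    "P2 = (\<lambda>y a b c d e. 2 * a * (g a b * c) - 2 * a * e - H1 (a\<^sup>2 - b\<^sup>2) - 2 * h0 * y
                         + h0 / 2 * (ln ((a + b)\<^sup>2) - ln ((a - b)\<^sup>2)))"
  show ?thesis
  proof (rule exI[of _ P1], rule exI[of _ P2], intro allI impI)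
    fix U and u :: "real \<Rightarrow> real \<Rightarrow> real"
    assume hyp: "open U \<and> smooth2_on U u
      \<and> (\<forall>(t, x) \<in> U. px u t x \<noteq> 0 \<and> (u t x)\<^sup>2 - (px u t x)\<^sup>2 \<noteq> 0)
      \<and> (let m = (\<lambda>t x. u t x - px (px u) t x) in
          \<forall>(t, x) \<in> U. pt m t x + f (u t x) (px u t x) * m t x
                       + px (\<lambda>t x. g (u t x) (px u t x) * m t x) t x = 0)"
    have U: "open U" using hyp by blast
    have sm: "\<And>ds. (\<lambda>z. dapp ds u (fst z) (snd z)) differentiable_on U"
      using hyp unfolding smooth2_on_def by blast
    have nz: "\<And>t x. (t,x) \<in> U \<Longrightarrow> px u t x \<noteq> 0 \<and> (u t x)\<^sup>2 - (px u t x)\<^sup>2 \<noteq> 0"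
      using hyp by blast
    have eqn: "\<And>t x. (t,x) \<in> U \<Longrightarrow> pt (\<lambda>t x. u t x - px (px u) t x) t x
        + f (u t x) (px u t x) * (u t x - px (px u) t x)
        + px (\<lambda>t x. g (u t x) (px u t x) * (u t x - px (px u) t x)) t x = 0"
      using hyp unfolding Let_def by blast
    have dat: "\<And>ds s y. (s,y) \<in> U \<Longrightarrow> (\<lambda>z. dapp ds u (fst z) (snd z)) differentiable (at (s,y))"
      using sm differentiable_on_eq_differentiable_at[OF U] by blast
    have pdx: "\<And>ds s y. (s,y) \<in> U \<Longrightarrow> ((\<lambda>y. dapp ds u s y) has_real_derivative dapp (False # ds) u s y) (at y)"
      using partial_derivs(2)[OF dat] by simp
    have pdt: "\<And>ds s y. (s,y) \<in> U \<Longrightarrow> ((\<lambda>s. dapp ds u s y) has_real_derivative dapp (True # ds) u s y) (at s)"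
      using partial_derivs(1)[OF dat] by simp
    have cl0: "\<And>s y. (s,y) \<in> U \<Longrightarrow> px (pt u) s y = pt (px u) s y"
    proof -
      fix s y assume "(s,y) \<in> U"
      then show "px (pt u) s y = pt (px u) s y"
        using clairaut[OF U _ sm[of "[]", simplified] sm[of "[True]", simplified] sm[of "[False]", simplified]] by simp
    qed
    have main: "\<And>t x. (t,x) \<in> U \<Longrightarrow>
           ((\<lambda>y. P1 y (u t y) (px u t y) (u t y - px (px u) t y) (pt u t y) (px (pt u) t y))
              has_real_derivative (- pt u t x)) (at x)
         \<and> ((\<lambda>y. P2 y (u t y) (px u t y) (u t y - px (px u) t y) (pt u t y) (px (pt u) t y))
              has_real_derivative (- pt (\<lambda>t x. (px u t x)\<^sup>2 + (u t x)\<^sup>2) t x)) (at x)"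
    proof -
      fix t x assume tx: "(t,x) \<in> U"
      define a where "a = u t x"
      define b where "b = px u t x"
      define c where "c = px (px u) t x"
      define c3 where "c3 = px (px (px u)) t x"
      define ut where "ut = pt u t x"
      define e where "e = px (pt u) t x"
      define e' where "e' = px (px (pt u)) t x"
      have b0: "b \<noteq> 0" and w0: "a\<^sup>2 - b\<^sup>2 \<noteq> 0" using nz[OF tx] by (auto simp: a_def b_def)
      have apb: "a + b \<noteq> 0" and amb: "a - b \<noteq> 0"
      proof -
        have fac: "a\<^sup>2 - b\<^sup>2 = (a+b)*(a-b)" by (simp add: power2_eq_square algebra_simps)
        show "a + b \<noteq> 0" "a - b \<noteq> 0" using w0 unfolding fac by auto
      qed
      have cl1: "px (pt (px u)) t x = pt (px (px u)) t x"
        using clairaut[OF U tx sm[of "[False]", simplified] sm[of "[True,False]", simplified] sm[of "[False,False]", simplified]] by simp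
      have S: "open {y. (t,y) \<in> U}"
      proof -
        have "open ((\<lambda>y. (t,y)) -` U)"
          by (rule continuous_open_vimage[OF U]) (intro continuous_intros)
        then show ?thesis by (simp add: vimage_def)
      qed
      have d1: "((\<lambda>y. px (pt u) t y) has_real_derivative e') (at x)"
        using pdx[OF tx, of "[False,True]"] by (simp add: e'_def)
      have d2: "((\<lambda>y. pt (px u) t y) has_real_derivative px (pt (px u)) t x) (at x)"
        using pdx[OF tx, of "[True,False]"] by simp
      have d1': "((\<lambda>y. pt (px u) t y) has_real_derivative e') (at x)"
        by (rule has_field_derivative_transform_within_open[OF d1 S]) (use tx cl0 in auto)
      have mix: "pt (px (px u)) t x = e'"
        using DERIV_unique[OF d2 d1'] cl1 by simp
      have du: "((\<lambda>y. u t y) has_real_derivative b) (at x)"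
        using pdx[OF tx, of "[]"] by (simp add: b_def)
      have dux: "((\<lambda>y. px u t y) has_real_derivative c) (at x)"
        using pdx[OF tx, of "[False]"] by (simp add: c_def)
      have duxx: "((\<lambda>y. px (px u) t y) has_real_derivative c3) (at x)"
        using pdx[OF tx, of "[False,False]"] by (simp add: c3_def)
      have tu: "((\<lambda>s. u s x) has_real_derivative ut) (at t)"
        using pdt[OF tx, of "[]"] by (simp add: ut_def)
      have tux: "((\<lambda>s. px u s x) has_real_derivative e) (at t)"
        using pdt[OF tx, of "[False]"] cl0[OF tx] by (simp add: e_def)
      have tuxx: "((\<lambda>s. px (px u) s x) has_real_derivative e') (at t)"
        using pdt[OF tx, of "[False,False]"] mix by simp
      have ptm: "pt (\<lambda>t x. u t x - px (px u) t x) t x = ut - e'"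
        unfolding pt_def by (rule DERIV_imp_deriv) (intro DERIV_diff tu tuxx)
      have ptH: "pt (\<lambda>t x. (px u t x)\<^sup>2 + (u t x)\<^sup>2) t x = 2 * b * e + 2 * a * ut"
        unfolding pt_def a_def b_def
        by (rule DERIV_imp_deriv) (auto intro!: derivative_eq_intros tu tux)
      define Gf where "Gf = (\<lambda>y. g (u t y) (px u t y) * (u t y - px (px u) t y))"
      have dw: "((\<lambda>y. (u t y)\<^sup>2 - (px u t y)\<^sup>2) has_real_derivative 2 * a * b - 2 * b * c) (at x)"
        by (auto intro!: derivative_eq_intros du dux simp: a_def b_def)
      have "\<exists>Gd. (Gf has_real_derivative Gd) (at x)"
      proof -
        note dA = DERIV_mult[OF du DERIV_chain2[OF f1d dw]]
        note dB = DERIV_chain2[OF h1d dw]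
        have dn: "((\<lambda>y. f0 * (u t y)\<^sup>2 + h0 * u t y) has_real_derivative f0 * (2 * a * b) + h0 * b) (at x)"
          by (auto intro!: derivative_eq_intros du simp: a_def)
        note dd = DERIV_mult[OF dux dw]
        have nz2: "px u t x * ((u t x)\<^sup>2 - (px u t x)\<^sup>2) \<noteq> 0" using b0 w0 by (simp add: a_def b_def)
        note r = DERIV_mult[OF DERIV_add[OF DERIV_add[OF dA dB] DERIV_divide[OF dn dd nz2]] DERIV_diff[OF du duxx]]
        show ?thesis unfolding Gf_def assms(4) using r by blast
      qed
      then obtain Gd where dG: "(Gf has_real_derivative Gd) (at x)" by blast
      have pxG: "px (\<lambda>t x. g (u t x) (px u t x) * (u t x - px (px u) t x)) t x = Gd"
        unfolding px_def[of "(\<lambda>t x. g (u t x) (px u t x) * (u t x - px (px u) t x))"]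
        using DERIV_imp_deriv[OF dG] by (simp add: Gf_def)
      have E: "ut - e' + f a b * (a - c) + Gd = 0"
        using eqn[OF tx] ptm pxG by (simp add: a_def b_def c_def)
      have "((\<lambda>y. P1 y (u t y) (px u t y) (u t y - px (px u) t y) (pt u t y) (px (pt u) t y))
              has_real_derivative (- pt u t x)) (at x)"
      proof -
        have dLp0: "((\<lambda>y. (u t y + px u t y)\<^sup>2) has_real_derivative 2 * (a + b) * (b + c)) (at x)"
          by (auto intro!: derivative_eq_intros du dux simp: a_def b_def)
        have dLm0: "((\<lambda>y. (u t y - px u t y)\<^sup>2) has_real_derivative 2 * (a - b) * (b - c)) (at x)"
          by (auto intro!: derivative_eq_intros du dux simp: a_def b_def)
        have pp: "0 < (u t x + px u t x)\<^sup>2" "0 < (u t x - px u t x)\<^sup>2"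
          using apb amb by (auto simp: a_def b_def)
        note dLp = DERIV_chain2[OF DERIV_ln[OF pp(1)] dLp0]
        note dLm = DERIV_chain2[OF DERIV_ln[OF pp(2)] dLm0]
        note dFw = DERIV_chain2[OF F1 dw]
        note r = DERIV_diff[OF DERIV_add[OF DERIV_add[OF DERIV_diff[OF dG d1] DERIV_cdivide[OF dFw, of 2]]
                   DERIV_cmult[OF DERIV_ident, of f0]] DERIV_cmult[OF DERIV_diff[OF dLp dLm], of "f0/4"]]
        have feq: "(\<lambda>y. P1 y (u t y) (px u t y) (u t y - px (px u) t y) (pt u t y) (px (pt u) t y))
          = (\<lambda>y. Gf y - px (pt u) t y + F1 ((u t y)\<^sup>2 - (px u t y)\<^sup>2) / 2 + f0 * y
               - f0 / 4 * (ln ((u t y + px u t y)\<^sup>2) - ln ((u t y - px u t y)\<^sup>2)))"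
          by (simp add: P1_def Gf_def)
        have key: "inverse ((a + b)\<^sup>2) * (2 * (a + b) * (b + c)) - inverse ((a - b)\<^sup>2) * (2 * (a - b) * (b - c))
             = 4 * (a * c - b\<^sup>2) / (a\<^sup>2 - b\<^sup>2)"
        proof -
          have fac: "a\<^sup>2 - b\<^sup>2 = (a+b)*(a-b)" by (simp add: power2_eq_square algebra_simps)
          have gen: "\<And>z w::real. z \<noteq> 0 \<Longrightarrow> inverse (z\<^sup>2) * (2 * z * w) = 2 * w / z"
            by (simp add: power2_eq_square field_simps)
          have k1: "inverse ((a + b)\<^sup>2) * (2 * (a + b) * (b + c)) = 2 * (b + c) / (a + b)"
            using gen[OF apb] .
          have k2: "inverse ((a - b)\<^sup>2) * (2 * (a - b) * (b - c)) = 2 * (b - c) / (a - b)"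
            using gen[OF amb] .
          have k3: "2 * (b + c) / (a + b) - 2 * (b - c) / (a - b) = 4 * (a * c - b\<^sup>2) / ((a+b)*(a-b))"
            using apb amb by (simp add: field_simps power2_eq_square)
          show ?thesis unfolding k1 k2 k3 fac ..
        qed
        have val: "Gd - e' + f1 (a\<^sup>2 - b\<^sup>2) * (2 * a * b - 2 * b * c) / 2 + f0 * 1
             - f0 / 4 * (inverse ((a + b)\<^sup>2) * (2 * (a + b) * (b + c)) - inverse ((a - b)\<^sup>2) * (2 * (a - b) * (b - c)))
             = - ut"
        proof -
          have ut: "ut = e' - f a b * (a - c) - Gd" using E by simp
          show ?thesis unfolding key ut assms(3) using w0 by (simp add: field_simps power2_eq_square)
        qed
        show ?thesis unfolding feq ut_def[symmetric]
          using r unfolding a_def[symmetric] b_def[symmetric] val .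
      qed
      moreover have "((\<lambda>y. P2 y (u t y) (px u t y) (u t y - px (px u) t y) (pt u t y) (px (pt u) t y))
              has_real_derivative (- pt (\<lambda>t x. (px u t x)\<^sup>2 + (u t x)\<^sup>2) t x)) (at x)"
      proof -
        have dLp0: "((\<lambda>y. (u t y + px u t y)\<^sup>2) has_real_derivative 2 * (a + b) * (b + c)) (at x)"
          by (auto intro!: derivative_eq_intros du dux simp: a_def b_def)
        have dLm0: "((\<lambda>y. (u t y - px u t y)\<^sup>2) has_real_derivative 2 * (a - b) * (b - c)) (at x)"
          by (auto intro!: derivative_eq_intros du dux simp: a_def b_def)
        have pp: "0 < (u t x + px u t x)\<^sup>2" "0 < (u t x - px u t x)\<^sup>2"
          using apb amb by (auto simp: a_def b_def)
        note dLp = DERIV_chain2[OF DERIV_ln[OF pp(1)] dLp0]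
        note dLm = DERIV_chain2[OF DERIV_ln[OF pp(2)] dLm0]
        note dHw = DERIV_chain2[OF H1 dw]
        note dA2 = DERIV_mult[OF DERIV_cmult[OF du, of 2] dG]
        note dB2 = DERIV_mult[OF DERIV_cmult[OF du, of 2] d1]
        note r = DERIV_add[OF DERIV_diff[OF DERIV_diff[OF DERIV_diff[OF dA2 dB2] dHw]
                   DERIV_cmult[OF DERIV_ident, of "2*h0"]] DERIV_cmult[OF DERIV_diff[OF dLp dLm], of "h0/2"]]
        have feq: "(\<lambda>y. P2 y (u t y) (px u t y) (u t y - px (px u) t y) (pt u t y) (px (pt u) t y))
          = (\<lambda>y. 2 * u t y * Gf y - 2 * u t y * px (pt u) t y - H1 ((u t y)\<^sup>2 - (px u t y)\<^sup>2) - 2 * h0 * y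
               + h0 / 2 * (ln ((u t y + px u t y)\<^sup>2) - ln ((u t y - px u t y)\<^sup>2)))"
          by (simp add: P2_def Gf_def)
        have Gfx: "Gf x = g a b * (a - c)" by (simp add: Gf_def a_def b_def c_def)
        have key2: "inverse ((a + b)\<^sup>2) * (2 * (a + b) * (b + c)) - inverse ((a - b)\<^sup>2) * (2 * (a - b) * (b - c))
             = 4 * (a * c - b\<^sup>2) / (a\<^sup>2 - b\<^sup>2)"
        proof -
          have fac: "a\<^sup>2 - b\<^sup>2 = (a+b)*(a-b)" by (simp add: power2_eq_square algebra_simps)
          have gen: "\<And>z w::real. z \<noteq> 0 \<Longrightarrow> inverse (z\<^sup>2) * (2 * z * w) = 2 * w / z"
            by (simp add: power2_eq_square field_simps)
          have k1: "inverse ((a + b)\<^sup>2) * (2 * (a + b) * (b + c)) = 2 * (b + c) / (a + b)"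
            using gen[OF apb] .
          have k2: "inverse ((a - b)\<^sup>2) * (2 * (a - b) * (b - c)) = 2 * (b - c) / (a - b)"
            using gen[OF amb] .
          have k3: "2 * (b + c) / (a + b) - 2 * (b - c) / (a - b) = 4 * (a * c - b\<^sup>2) / ((a+b)*(a-b))"
            using apb amb by (simp add: field_simps power2_eq_square)
          show ?thesis unfolding k1 k2 k3 fac ..
        qed
        have val: "2 * b * (g a b * (a - c)) + Gd * (2 * a) - (2 * b * e + e' * (2 * a))
             - h1 (a\<^sup>2 - b\<^sup>2) * (2 * a * b - 2 * b * c) - 2 * h0 * 1
             + h0 / 2 * (inverse ((a + b)\<^sup>2) * (2 * (a + b) * (b + c)) - inverse ((a - b)\<^sup>2) * (2 * (a - b) * (b - c)))
             = - (2 * b * e + 2 * a * ut)"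
        proof -
          have ut: "ut = e' - f a b * (a - c) - Gd" using E by simp
          show ?thesis unfolding key2 ut assms(3) assms(4) by (rule alg2[OF refl w0 b0])
        qed
        show ?thesis unfolding feq ptH
          using r unfolding Gfx a_def[symmetric] b_def[symmetric] e_def[symmetric] val .
      qed
      ultimately show "((\<lambda>y. P1 y (u t y) (px u t y) (u t y - px (px u) t y) (pt u t y) (px (pt u) t y))
              has_real_derivative (- pt u t x)) (at x)
         \<and> ((\<lambda>y. P2 y (u t y) (px u t y) (u t y - px (px u) t y) (pt u t y) (px (pt u) t y))
              has_real_derivative (- pt (\<lambda>t x. (px u t x)\<^sup>2 + (u t x)\<^sup>2) t x)) (at x)" by blast
    qed
    then show "let m = (\<lambda>t x. u t x - px (px u) t x) in
         \<forall>(t, x) \<in> U.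
           ((\<lambda>y. P1 y (u t y) (px u t y) (m t y) (pt u t y) (px (pt u) t y))
              has_real_derivative (- pt u t x)) (at x)
         \<and> ((\<lambda>y. P2 y (u t y) (px u t y) (m t y) (pt u t y) (px (pt u) t y))
              has_real_derivative (- pt (\<lambda>t x. (px u t x)\<^sup>2 + (u t x)\<^sup>2) t x)) (at x)"
      unfolding Let_def by blast
  qed
qed

end
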